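(* Let $R$ be a Bézout domain and let $A,B,C\in R^{n\times n}$ satisfy $ABA=ACA$. If $R_r(AB)=R_r(ABA)$ and $R_r(CA)=R_r(CAB)$, then $AB$ is similar to $CA$.
   Context: A Bézout domain is an integral domain in which every finitely generated ideal is principal. For $M\in R^{m\times n}$, $R_r(M)=\{Mx : x\in R^{n\times 1}\}\subseteq R^{m\times 1}$ is the column space of $M$. Two matrices $M,N\in R^{n\times n}$ are similar if $M=S^{-1}NS$ for some invertible $S\in R^{n\times n}$. *)

theory Defs
  imports "HOL-Analysis.Analysis"
begin

definition bezout_domain :: "'a::idom itself \<Rightarrow> bool" where
  "bezout_domain _ \<longleftrightarrow>
     (\<forall>F::'a set. finite F \<longrightarrow>
        (\<exists>d. {(\<Sum>x\<in>F. c x * x) | c. True} = {d * r | r. True}))"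

definition col_space :: "'a::semiring_1 ^'n^'m \<Rightarrow> ('a^'m) set" where
  "col_space M = {M *v x | x. True}"

definition similar_matrix :: "'a::semiring_1 ^'n^'n \<Rightarrow> 'a^'n^'n \<Rightarrow> bool" where
  "similar_matrix M N \<longleftrightarrow>
     (\<exists>S Sinv. S ** Sinv = mat 1 \<and> Sinv ** S = mat 1 \<and> M = Sinv ** N ** S)"

end

theory Submission
  imports Defs "HOL-Computational_Algebra.Fraction_Field"
begin

lemma field_inj:
  fixes M W :: "'k::field^'n^'n"
  assumes MW: "M = M ** M ** W"
  shows "M *v (M *v z) = 0 \<Longrightarrow> M *v z = 0"
proof -
  assume h: "M *v (M *v z) = 0"
  define f where "f = (\<lambda>x. M *v x)"
  have lf: "Vector_Spaces.linear (*s) (*s) f" unfolding f_def by (rule matrix_vector_mul_linear_gen)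
  let ?U = "range f"
  obtain B where B: "B \<subseteq> ?U" "vec.independent B" "?U \<subseteq> vec.span B" "card B = vec.dim ?U"
    using vec.basis_exists by blast
  have fB: "finite B" using B(2) vec.finiteI_independent by auto
  have fx: "f x = f (f (W *v x))" for x
    unfolding f_def by (metis MW matrix_vector_mul_assoc)
  have Uspan: "?U \<subseteq> vec.span (f ` B)"
  proof
    fix y assume "y \<in> ?U"
    then obtain x where y: "y = f x" by auto
    have "f (W *v x) \<in> vec.span B" using B(3) by auto
    then have "f (f (W *v x)) \<in> f ` vec.span B" by auto
    then show "y \<in> vec.span (f ` B)" using y fx vec.linear_span_image[OF lf] by metis
  qed
  have fBU: "f ` B \<subseteq> ?U" by auto
  have fBi: "vec.independent (f ` B)"
    by (rule vec.card_le_dim_spanning[OF fBU Uspan]) (use fB B(4) card_image_le[OF fB, of f] in auto)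
  have "vec.dim ?U \<le> card (f ` B)"
    by (rule vec.span_card_ge_dim[OF fBU Uspan]) (use fB in auto)
  moreover have "card (f ` B) \<le> card B" by (rule card_image_le, rule fB)
  ultimately have "card (f ` B) = card B" using B(4) by arith
  then have fiB: "inj_on f B" by (simp add: eq_card_imp_inj_on fB)
  have "f z \<in> vec.span B" using B(3) by auto
  moreover have "f (f z) = 0" using h f_def by simp
  ultimately have "f z = 0" using vec.linear_indep_image_lemma[OF lf fB fBi fiB] by blast
  then show ?thesis unfolding f_def .
qed

definition emb :: "'a::idom \<Rightarrow> 'a fract" where "emb a = Fract a 1"

lemma emb_add: "emb (a + b) = emb a + emb b" by (simp add: emb_def)
lemma emb_mult: "emb (a * b) = emb a * emb b" by (simp add: emb_def)
lemma emb_0: "emb 0 = 0" by (simp add: emb_def Zero_fract_def)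
lemma emb_1: "emb 1 = 1" by (simp add: emb_def One_fract_def)
lemma emb_inj: "emb a = emb b \<longleftrightarrow> a = b" by (simp add: emb_def eq_fract)
lemma emb_sum: "emb (sum f A) = sum (\<lambda>x. emb (f x)) A"
  by (induction A rule: infinite_finite_induct) (auto simp: emb_0 emb_add)

definition memb :: "'a::idom^'n^'m \<Rightarrow> 'a fract^'n^'m" where
  "memb M = (\<chi> i j. emb (M$i$j))"
definition vemb :: "'a::idom^'n \<Rightarrow> 'a fract^'n" where
  "vemb v = (\<chi> i. emb (v$i))"

lemma memb_mult: "memb (A ** B) = memb A ** memb B"
  by (simp add: memb_def matrix_matrix_mult_def emb_sum emb_mult vec_eq_iff)
lemma memb_vmult: "vemb (A *v v) = memb A *v vemb v"
  by (simp add: memb_def vemb_def matrix_vector_mult_def emb_sum emb_mult vec_eq_iff)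
lemma memb_inj: "memb A = memb B \<longleftrightarrow> A = B"
  by (auto simp add: memb_def vec_eq_iff emb_inj)
lemma vemb_inj: "vemb A = vemb B \<longleftrightarrow> A = B"
  by (auto simp add: vemb_def vec_eq_iff emb_inj)
lemma memb_1: "memb (mat 1) = mat 1"
  by (simp add: memb_def mat_def vec_eq_iff emb_0 emb_1)
lemma vemb_0: "vemb 0 = 0"
  by (simp add: vemb_def vec_eq_iff emb_0)

lemma idom_inj:
  fixes M W :: "'a::idom^'n^'n"
  assumes MW: "M = M ** M ** W"
  shows "M *v (M *v z) = 0 \<Longrightarrow> M *v z = 0"
proof -
  assume h: "M *v (M *v z) = 0"
  have "memb M = memb M ** memb M ** memb W" using MW memb_mult by metis
  moreover have "memb M *v (memb M *v vemb z) = 0" using h by (metis memb_vmult vemb_0)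
  ultimately have "memb M *v vemb z = 0" by (rule field_inj)
  then show ?thesis by (metis memb_vmult vemb_0 vemb_inj)
qed

lemma idom_inj_mat:
  fixes M W Z :: "'a::idom^'n^'n"
  assumes MW: "M = M ** M ** W" and h: "M ** M ** Z = 0"
  shows "M ** Z = 0"
proof -
  have "(M ** Z) *v x = 0" for x
  proof -
    have "M *v (M *v (Z *v x)) = 0" using h by (metis matrix_vector_mul_assoc matrix_vector_mult_0)
    then have "M *v (Z *v x) = 0" by (rule idom_inj[OF MW])
    then show ?thesis by (simp add: matrix_vector_mul_assoc)
  qed
  then show ?thesis by (metis matrix_eq matrix_vector_mult_0)
qed

lemma idom_left_right:
  fixes A B :: "'a::idom^'n^'n"
  assumes "A ** B = mat 1"
  shows "B ** A = mat 1"
proof -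
  have "memb A ** memb B = mat 1" using assms by (metis memb_mult memb_1)
  then have "memb B ** memb A = mat 1" using matrix_left_right_inverse by blast
  then show ?thesis by (metis memb_mult memb_1 memb_inj)
qed


lemma bez_fin:
  assumes "bezout_domain TYPE('a::idom)" "finite (F::'a set)"
  shows "\<exists>d c. d = (\<Sum>x\<in>F. c x * x) \<and> (\<forall>x\<in>F. d dvd x)"
proof -
  obtain d where d: "{(\<Sum>x\<in>F. c x * x) | c. True} = {d * r | r. True}"
    using assms unfolding bezout_domain_def by blast
  have "\<exists>r. d = d * r" by (rule exI[of _ 1]) simp
  then have "d \<in> {d * r | r. True}" by simp
  then have "d \<in> {(\<Sum>x\<in>F. c x * x) | c. True}" using d by simp
  then obtain c where c: "d = (\<Sum>x\<in>F. c x * x)" by blast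
  have "d dvd y" if y: "y \<in> F" for y
  proof -
    have "(\<Sum>x\<in>F. (if x = y then 1 else 0) * x) = (\<Sum>x\<in>F. if x = y then x else 0)"
      by (rule sum.cong) auto
    also have "\<dots> = y" using y assms(2) by simp
    finally have "(\<Sum>x\<in>F. (if x = y then 1 else 0) * x) = y" .
    then have "\<exists>c'. y = (\<Sum>x\<in>F. c' x * x)"
      by (intro exI[of _ "\<lambda>x. if x = y then 1 else 0"]) simp
    then have yin: "y \<in> {(\<Sum>x\<in>F. c x * x) | c. True}" by simp
    have "y \<in> {d * r | r. True}" by (subst d[symmetric]) (rule yin)
    then obtain r where "y = d * r" by blast
    then show ?thesis by simp
  qed
  then show ?thesis using c by blast
qed

lemma bez2:
  assumes "bezout_domain TYPE('a::idom)"
  shows "\<exists>d p q a' b'. p * a + q * b = d \<and> a = d * a' \<and> b = d * (b'::'a)"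
proof -
  obtain d c where dc: "d = (\<Sum>x\<in>{a,b}. c x * x)" "\<forall>x\<in>{a,b}. d dvd x"
    using bez_fin[OF assms, of "{a,b}"] by auto
  have "d dvd a" "d dvd b" using dc(2) by auto
  then obtain a' b' where ab: "a = d * a'" "b = d * b'" by (meson dvdE)
  show ?thesis
  proof (cases "a = b")
    case True
    then have "c a * a + 0 * b = d" using dc(1) by simp
    then show ?thesis using ab by blast
  next
    case False
    then have "c a * a + c b * b = d" using dc(1) by simp
    then show ?thesis using ab by blast
  qed
qed

definition unimod :: "'a::comm_ring_1^'n \<Rightarrow> bool" where
  "unimod w \<longleftrightarrow> (\<exists>c. (\<Sum>i\<in>UNIV. c i * w$i) = 1)"

lemma bez_vec:
  assumes "bezout_domain TYPE('a::idom)" "(v::'a^'n) \<noteq> 0"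
  shows "\<exists>d w. d \<noteq> 0 \<and> v = d *s w \<and> unimod w"
proof -
  let ?F = "range (\<lambda>i. v$i)"
  obtain d c where dc: "d = (\<Sum>x\<in>?F. c x * x)" "\<forall>x\<in>?F. d dvd x"
    using bez_fin[OF assms(1), of ?F] by auto
  have "\<forall>i. \<exists>k. v$i = d * k" using dc(2) by (auto elim!: dvdE)
  then obtain k where k: "\<And>i. v$i = d * k i" by metis
  define w where "w = (\<chi> i. k i)"
  have vw: "v = d *s w" by (simp add: w_def vec_eq_iff k)
  have d0: "d \<noteq> 0" using assms(2) vw by auto
  define g where "g x = (SOME i. v$i = x)" for x
  have g: "v$(g x) = x" if "x \<in> ?F" for x using that unfolding g_def by (auto intro: someI)
  have ig: "inj_on g ?F" by (metis g inj_onI)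
  let ?R = "g ` ?F"
  have "d = (\<Sum>x\<in>?F. c x * x)" by (rule dc(1))
  also have "\<dots> = (\<Sum>i\<in>?R. c (v$i) * v$i)"
    by (subst sum.reindex[OF ig]) (auto simp: g)
  also have "\<dots> = (\<Sum>i\<in>UNIV. if i \<in> ?R then c (v$i) * v$i else 0)"
    using sum.inter_restrict[of UNIV "\<lambda>i. c (v$i) * v$i" ?R] by simp
  also have "\<dots> = (\<Sum>i\<in>UNIV. (if i \<in> ?R then c (v$i) else 0) * v$i)"
    by (rule sum.cong) auto
  also have "\<dots> = d * (\<Sum>i\<in>UNIV. (if i \<in> ?R then c (v$i) else 0) * w$i)"
    using k by (simp add: w_def sum_distrib_left mult.left_commute)
  finally have one: "(\<Sum>i\<in>UNIV. (if i \<in> ?R then c (v$i) else 0) * w$i) = 1"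
    using d0 by (metis mult_cancel_left1)
  have "unimod w" unfolding unimod_def by (rule exI[of _ "\<lambda>i. if i \<in> ?R then c (v$i) else 0"], rule one)
  then show ?thesis using d0 vw by blast
qed

lemma unimod_mult:
  fixes U U' :: "'a::comm_ring_1^'n^'n"
  assumes "unimod w" "U' ** U = mat 1"
  shows "unimod (U *v w)"
proof -
  obtain c where c: "(\<Sum>i\<in>UNIV. c i * w$i) = 1" using assms(1) unfolding unimod_def by blast
  have w: "w = U' *v (U *v w)" by (simp add: matrix_vector_mul_assoc assms(2))
  let ?y = "U *v w"
  have "(\<Sum>i\<in>UNIV. c i * w$i) = (\<Sum>i\<in>UNIV. c i * (\<Sum>k\<in>UNIV. U'$i$k * ?y$k))"
    by (subst w) (simp add: matrix_vector_mult_def)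
  also have "\<dots> = (\<Sum>i\<in>UNIV. \<Sum>k\<in>UNIV. c i * U'$i$k * ?y$k)"
    by (simp add: sum_distrib_left mult.assoc)
  also have "\<dots> = (\<Sum>k\<in>UNIV. \<Sum>i\<in>UNIV. c i * U'$i$k * ?y$k)"
    by (rule sum.swap)
  also have "\<dots> = (\<Sum>k\<in>UNIV. (\<Sum>i\<in>UNIV. c i * U'$i$k) * ?y$k)"
    by (simp add: sum_distrib_right)
  finally show ?thesis unfolding unimod_def using c by auto
qed


lemma mm_nth: "((A::'a::semiring_1^'n^'m) ** B)$i$j = (\<Sum>k\<in>UNIV. A$i$k * B$k$j)"
  by (simp add: matrix_matrix_mult_def)
lemma mv_nth: "((A::'a::semiring_1^'n^'m) *v v)$i = (\<Sum>k\<in>UNIV. A$i$k * v$k)"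
  by (simp add: matrix_vector_mult_def)

lemma sum2:
  assumes "i \<noteq> j" "\<And>k. k \<noteq> i \<Longrightarrow> k \<noteq> j \<Longrightarrow> f k = 0"
  shows "(\<Sum>k\<in>(UNIV::'n::finite set). f k) = f i + (f j :: 'a::comm_monoid_add)"
proof -
  have "(\<Sum>k\<in>UNIV. f k) = (\<Sum>k\<in>{i,j}. f k)"
    by (rule sum.mono_neutral_right) (use assms in auto)
  then show ?thesis using assms by simp
qed

lemma sum1:
  assumes "\<And>k. k \<noteq> i \<Longrightarrow> f k = 0"
  shows "(\<Sum>k\<in>(UNIV::'n::finite set). f k) = (f i :: 'a::comm_monoid_add)"
proof -
  have "(\<Sum>k\<in>UNIV. f k) = (\<Sum>k\<in>{i}. f k)"
    by (rule sum.mono_neutral_right) (use assms in auto)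
  then show ?thesis by simp
qed

definition mk2 :: "'n \<Rightarrow> 'n \<Rightarrow> 'a::comm_ring_1 \<Rightarrow> 'a \<Rightarrow> 'a \<Rightarrow> 'a \<Rightarrow> 'a^'n^'n" where
  "mk2 i j x y z u = (\<chi> r s. if r = i then (if s = i then x else if s = j then y else 0)
     else if r = j then (if s = i then z else if s = j then u else 0) else (if r = s then 1 else 0))"

lemma mk2_i: "(mk2 i j x y z u :: 'a::comm_ring_1^'n::finite^'n)$i$s = (if s = i then x else if s = j then y else 0)"
  by (simp add: mk2_def)
lemma mk2_j: "i \<noteq> j \<Longrightarrow> (mk2 i j x y z u :: 'a::comm_ring_1^'n::finite^'n)$j$s = (if s = i then z else if s = j then u else 0)"
  by (simp add: mk2_def)
lemma mk2_o: "r \<noteq> i \<Longrightarrow> r \<noteq> j \<Longrightarrow> (mk2 i j x y z u :: 'a::comm_ring_1^'n::finite^'n)$r$s = (if r = s then 1 else 0)"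
  by (simp add: mk2_def)

lemma mk2_mult:
  fixes i j :: "'n::finite"
  assumes ij: "i \<noteq> j"
  shows "mk2 i j x y z u ** mk2 i j x' y' z' u' =
    (mk2 i j (x*x' + y*z') (x*y' + y*u') (z*x' + u*z') (z*y' + u*u') :: 'a::comm_ring_1^'n^'n)"
proof -
  let ?M = "mk2 i j x y z u :: 'a^'n^'n"
  let ?N = "mk2 i j x' y' z' u' :: 'a^'n^'n"
  have "(?M ** ?N)$r$s =
        (mk2 i j (x*x' + y*z') (x*y' + y*u') (z*x' + u*z') (z*y' + u*u') :: 'a::comm_ring_1^'n^'n)$r$s" for r s
  proof (cases "r = i \<or> r = j")
    case True
    have "(?M ** ?N)$r$s = ?M$r$i * ?N$i$s + ?M$r$j * ?N$j$s"
      unfolding mm_nth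
    proof (rule sum2[OF ij])
      fix k assume "k \<noteq> i" "k \<noteq> j"
      then show "?M$r$k * ?N$k$s = 0" using True ij by (auto simp: mk2_i mk2_j)
    qed
    then show ?thesis using True ij by (auto simp: mk2_i mk2_j)
  next
    case False
    have "(?M ** ?N)$r$s = ?M$r$r * ?N$r$s"
      unfolding mm_nth
    proof (rule sum1)
      fix k assume "k \<noteq> r"
      then show "?M$r$k * ?N$k$s = 0" using False by (simp add: mk2_o)
    qed
    then show ?thesis using False by (simp add: mk2_o)
  qed
  then show ?thesis by (simp add: vec_eq_iff)
qed

lemma mk2_id: "i \<noteq> j \<Longrightarrow> mk2 i j 1 0 0 1 = mat 1"
  by (auto simp: mk2_def mat_def vec_eq_iff)

lemma mk2_vec:
  fixes i j :: "'n::finite"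
  assumes ij: "i \<noteq> j"
  shows "(mk2 i j x y z u *v w)$r = (if r = i then x * w$i + y * w$j else if r = j then z * w$i + u * w$j else (w$r :: 'a::comm_ring_1))"
proof (cases "r = i \<or> r = j")
  case True
  let ?M = "mk2 i j x y z u :: 'a^'n^'n"
  have "(?M *v w)$r = ?M$r$i * w$i + ?M$r$j * w$j"
    unfolding mv_nth
  proof (rule sum2[OF ij])
    fix k assume "k \<noteq> i" "k \<noteq> j"
    then show "?M$r$k * w$k = 0" using True ij by (auto simp: mk2_i mk2_j)
  qed
  then show ?thesis using True ij by (auto simp: mk2_i mk2_j)
next
  case False
  let ?M = "mk2 i j x y z u :: 'a^'n^'n"
  have "(?M *v w)$r = ?M$r$r * w$r"
    unfolding mv_nth
  proof (rule sum1)
    fix k assume "k \<noteq> r"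
    then show "?M$r$k * w$k = 0" using False by (simp add: mk2_o)
  qed
  then show ?thesis using False by (simp add: mk2_o)
qed

definition blk :: "'n set \<Rightarrow> 'a::comm_ring_1^'n^'n \<Rightarrow> bool" where
  "blk S M \<longleftrightarrow> (\<forall>i j. (i \<in> S \<or> j \<in> S) \<longrightarrow> M$i$j = (if i = j then 1 else 0))"

lemma blk_mult:
  fixes A B :: "'a::comm_ring_1^'n::finite^'n"
  assumes A: "blk S A" and B: "blk S B" shows "blk S (A ** B)"
  unfolding blk_def
proof (intro allI impI)
  fix i j assume h: "i \<in> S \<or> j \<in> S"
  show "(A ** B)$i$j = (if i = j then 1 else 0)"
  proof (cases "i \<in> S")
    case True
    have "(A ** B)$i$j = A$i$i * B$i$j"
      unfolding mm_nth
    proof (rule sum1)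
      fix k assume "k \<noteq> i" then show "A$i$k * B$k$j = 0" using A True by (simp add: blk_def)
    qed
    then show ?thesis using A B True by (simp add: blk_def)
  next
    case False
    then have jS: "j \<in> S" using h by auto
    have "(A ** B)$i$j = A$i$j * B$j$j"
      unfolding mm_nth
    proof (rule sum1)
      fix k assume "k \<noteq> j" then show "A$i$k * B$k$j = 0" using B jS by (simp add: blk_def)
    qed
    then show ?thesis using A B jS by (simp add: blk_def)
  qed
qed

lemma blk_mk2: "i \<notin> S \<Longrightarrow> j \<notin> S \<Longrightarrow> blk S (mk2 i j x y z u)"
  by (auto simp: blk_def mk2_def)

lemma blk_id: "blk S (mat 1)" by (simp add: blk_def mat_def)


definition dgm :: "('n \<Rightarrow> 'a::comm_ring_1) \<Rightarrow> 'a^'n^'n" where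
  "dgm f = (\<chi> r s. if r = s then f r else 0)"

lemma dgm_mult: "dgm f ** dgm g = (dgm (\<lambda>r. f r * g r) :: 'a::comm_ring_1^'n::finite^'n)"
proof -
  have "(dgm f ** dgm g)$r$s = (dgm (\<lambda>r. f r * g r) :: 'a::comm_ring_1^'n::finite^'n)$r$s" for r s
  proof -
    have "(dgm f ** dgm g)$r$s = (dgm f :: 'a^'n^'n)$r$r * (dgm g :: 'a^'n^'n)$r$s"
      unfolding mm_nth by (rule sum1) (simp add: dgm_def)
    then show ?thesis by (simp add: dgm_def)
  qed
  then show ?thesis by (simp add: vec_eq_iff)
qed

lemma dgm_vec: "((dgm f :: 'a::comm_ring_1^'n::finite^'n) *v w)$r = f r * w$r"
proof -
  have "((dgm f :: 'a::comm_ring_1^'n::finite^'n) *v w)$r = (dgm f :: 'a^'n^'n)$r$r * w$r"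
    unfolding mv_nth by (rule sum1) (simp add: dgm_def)
  then show ?thesis by (simp add: dgm_def)
qed

lemma dgm_one: "(\<And>r. f r = 1) \<Longrightarrow> dgm f = mat 1"
  by (simp add: dgm_def mat_def vec_eq_iff)

lemma blk_dgm: "(\<And>r. r \<in> S \<Longrightarrow> f r = 1) \<Longrightarrow> blk S (dgm f)"
  by (simp add: blk_def dgm_def)

lemma unimod_to_axis:
  fixes w :: "'a::idom^'n::finite"
  assumes bez: "bezout_domain TYPE('a)" and um: "unimod w" and wS: "\<forall>i\<in>S. w$i = 0"
  shows "\<exists>U U' t. U ** U' = mat 1 \<and> U' ** U = mat 1 \<and> blk S U \<and> blk S U' \<and> U *v w = axis t 1 \<and> t \<notin> S"
proof -
  have main: "\<forall>w::'a^'n. card {i. w$i \<noteq> 0} = N \<longrightarrow> unimod w \<longrightarrow> (\<forall>i\<in>S. w$i = 0) \<longrightarrow>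
     (\<exists>U U' t. U ** U' = mat 1 \<and> U' ** U = mat 1 \<and> blk S U \<and> blk S U' \<and> U *v w = axis t 1 \<and> t \<notin> S)" for N
  proof (induction N rule: less_induct)
    case (less N)
    show ?case
    proof (intro allI impI)
      fix w :: "'a^'n"
      assume card: "card {i. w$i \<noteq> 0} = N" and um: "unimod w" and wS: "\<forall>i\<in>S. w$i = 0"
      show "\<exists>U U' t. U ** U' = mat 1 \<and> U' ** U = mat 1 \<and> blk S U \<and> blk S U' \<and> U *v w = axis t 1 \<and> t \<notin> S"
      proof (cases "\<exists>i j. i \<noteq> j \<and> w$i \<noteq> 0 \<and> w$j \<noteq> 0")
        case True
        then obtain i j where ij: "i \<noteq> j" and wi: "w$i \<noteq> 0" and wj: "w$j \<noteq> 0" by blast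
        obtain d p q a' b' where bz: "p * w$i + q * w$j = d" "w$i = d * a'" "w$j = d * b'"
          using bez2[OF bez] by blast
        have d0: "d \<noteq> 0" using bz(2) wi by auto
        have "d * (p * a' + q * b') = d * 1"
          using bz by (simp add: algebra_simps)
        then have pq: "p * a' + q * b' = 1" using d0 by simp
        have iS: "i \<notin> S" "j \<notin> S" using wS wi wj by auto
        define U2 where "U2 = (mk2 i j p q (-b') a' :: 'a^'n^'n)"
        define U2' where "U2' = (mk2 i j a' (-q) b' p :: 'a^'n^'n)"
        have U2i: "U2 ** U2' = mat 1"
          unfolding U2_def U2'_def mk2_mult[OF ij]
          using pq by (simp add: mk2_id[OF ij, symmetric] algebra_simps)
        have U2i': "U2' ** U2 = mat 1"
          unfolding U2_def U2'_def mk2_mult[OF ij]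
          using pq by (simp add: mk2_id[OF ij, symmetric] algebra_simps)
        define w' where "w' = U2 *v w"
        have w'r: "w'$r = (if r = i then d else if r = j then 0 else w$r)" for r
          unfolding w'_def U2_def mk2_vec[OF ij] using bz ij by (auto simp: algebra_simps)
        have Z: "{r. w'$r \<noteq> 0} = {r. w$r \<noteq> 0} - {j}"
          using w'r d0 wi ij by auto
        have cardlt: "card {r. w'$r \<noteq> 0} < N"
        proof -
          have "j \<in> {r. w$r \<noteq> 0}" using wj by simp
          then have "card ({r. w$r \<noteq> 0} - {j}) < card {r. w$r \<noteq> 0}"
            by (intro card_Diff1_less) auto
          then show ?thesis unfolding Z card .
        qed
        have um': "unimod w'" unfolding w'_def by (rule unimod_mult[OF um U2i'])
        have wS': "\<forall>r\<in>S. w'$r = 0" using w'r wS iS by auto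
        obtain U3 U3' t where U3: "U3 ** U3' = mat 1" "U3' ** U3 = mat 1" "blk S U3" "blk S U3'"
           "U3 *v w' = axis t 1" "t \<notin> S"
          using less.IH[OF cardlt] um' wS' by blast
        have "(U3 ** U2) ** (U2' ** U3') = mat 1"
          by (metis U2i U3(1) matrix_mul_assoc matrix_mul_rid)
        moreover have "(U2' ** U3') ** (U3 ** U2) = mat 1"
          by (metis U2i' U3(2) matrix_mul_assoc matrix_mul_rid)
        moreover have "blk S (U3 ** U2)" "blk S (U2' ** U3')"
          using blk_mult U3 blk_mk2 iS unfolding U2_def U2'_def by blast+
        moreover have "(U3 ** U2) *v w = axis t 1"
          using U3(5) by (simp add: w'_def matrix_vector_mul_assoc)
        ultimately show ?thesis using U3(6) by blast
      next
        case False
        obtain c where c: "(\<Sum>i\<in>UNIV. c i * w$i) = 1" using um unfolding unimod_def by blast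
        have "\<exists>t. w$t \<noteq> 0"
        proof (rule ccontr)
          assume "\<not> ?thesis"
          then have "(\<Sum>i\<in>UNIV. c i * w$i) = 0" by simp
          then show False using c by simp
        qed
        then obtain t where wt: "w$t \<noteq> 0" by blast
        have w0: "w$r = 0" if "r \<noteq> t" for r using False wt that by blast
        have "(\<Sum>i\<in>UNIV. c i * w$i) = c t * w$t"
          by (rule sum1) (simp add: w0)
        then have ct: "c t * w$t = 1" using c by simp
        define U where "U = (dgm (\<lambda>r. if r = t then c t else 1) :: 'a^'n^'n)"
        define U' where "U' = (dgm (\<lambda>r. if r = t then w$t else 1) :: 'a^'n^'n)"
        have "U ** U' = mat 1" unfolding U_def U'_def dgm_mult
          by (rule dgm_one) (use ct in simp)
        moreover have "U' ** U = mat 1" unfolding U_def U'_def dgm_mult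
          by (rule dgm_one) (use ct in \<open>simp add: mult.commute\<close>)
        moreover have tS: "t \<notin> S" using wS wt by auto
        moreover have "blk S U" "blk S U'" unfolding U_def U'_def
          by (rule blk_dgm, use tS in auto)+
        moreover have "U *v w = axis t 1"
          by (simp add: vec_eq_iff U_def dgm_vec axis_def ct w0)
        ultimately show ?thesis by blast
      qed
    qed
  qed
  then show ?thesis using um wS by blast
qed


lemma madd_rdistrib: "((A::'a::semiring_1^'n^'m) + B) ** C = A ** C + B ** C"
  by (simp add: vec_eq_iff mm_nth distrib_right sum.distrib)
lemma msub_ldistrib: "(A::'a::ring_1^'n^'m) ** (B - C) = A ** B - A ** C"
  by (simp add: vec_eq_iff mm_nth right_diff_distrib sum_subtractf)
lemma msub_rdistrib: "((A::'a::ring_1^'n^'m) - B) ** C = A ** C - B ** C"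
  by (simp add: vec_eq_iff mm_nth left_diff_distrib sum_subtractf)

lemma inv_comp: "A ** A' = mat 1 \<Longrightarrow> B ** B' = mat 1 \<Longrightarrow> (A ** B) ** (B' ** A') = (mat 1::'a::semiring_1^'n^'n)"
  by (metis matrix_mul_assoc matrix_mul_rid)

lemma conj_mult:
  fixes U U' X Y :: "'a::semiring_1^'n^'n"
  assumes "U' ** U = mat 1"
  shows "(U ** X ** U') ** (U ** Y ** U') = U ** (X ** Y) ** U'"
proof -
  have "(U ** X ** U') ** (U ** Y ** U') = U ** X ** (U' ** U) ** Y ** U'" by (simp only: matrix_mul_assoc)
  also have "\<dots> = U ** (X ** Y) ** U'" using assms by (simp add: matrix_mul_assoc)
  finally show ?thesis .
qed

lemma mv_axis: "((M::'a::semiring_1^'n::finite^'m) *v axis t 1)$r = M$r$t"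
  unfolding mv_nth by (subst sum1[of t]) (auto simp: axis_def)

lemma mv_scale: "(M::'a::comm_ring_1^'n::finite^'m) *v (d *s w) = d *s (M *v w)"
  by (simp add: vec_eq_iff mv_nth sum_distrib_left mult.left_commute)

definition dg :: "'n set \<Rightarrow> 'a::comm_ring_1^'n^'n" where
  "dg S = (\<chi> i j. if i = j \<and> i \<in> S then 1 else 0)"

lemma idem_diag:
  fixes E :: "'a::idom^'n::finite^'n"
  assumes bez: "bezout_domain TYPE('a)" and EE: "E ** E = E"
  shows "\<exists>V V' :: 'a^'n^'n. \<exists>S. V ** V' = mat 1 \<and> V' ** V = mat 1 \<and> V ** E ** V' = dg S"
proof -
  have main: "\<forall>(S::'n set) (V::'a^'n^'n) (V'::'a^'n^'n). card (- S) = N \<longrightarrow> V ** V' = mat 1 \<longrightarrow> V' ** V = mat 1 \<longrightarrow> blk S (V ** E ** V') \<longrightarrow>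
     (\<exists>V V' :: 'a^'n^'n. \<exists>S. V ** V' = mat 1 \<and> V' ** V = mat 1 \<and> V ** E ** V' = dg S)" for N
  proof (induction N rule: less_induct)
    case (less N)
    show ?case
    proof (intro allI impI)
      fix S :: "'n set" and V V' :: "'a^'n^'n"
      assume cS: "card (- S) = N" and VV': "V ** V' = mat 1" and V'V: "V' ** V = mat 1"
        and bF: "blk S (V ** E ** V')"
      define F where "F = V ** E ** V'"
      have FF: "F ** F = F" unfolding F_def conj_mult[OF V'V] EE ..
      show "\<exists>V V' :: 'a^'n^'n. \<exists>S. V ** V' = mat 1 \<and> V' ** V = mat 1 \<and> V ** E ** V' = dg S"
      proof (cases "\<forall>i j. i \<notin> S \<longrightarrow> j \<notin> S \<longrightarrow> F$i$j = 0")
        case True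
        have "F$a$b = dg S$a$b" for a b
        proof (cases "a \<in> S \<or> b \<in> S")
          case c: True
          then have "F$a$b = (if a = b then 1 else 0)" using bF unfolding F_def[symmetric] blk_def by blast
          then show ?thesis using c by (auto simp: dg_def)
        next
          case c: False
          then show ?thesis using True by (auto simp: dg_def)
        qed
        then have "F = dg S" by (simp add: vec_eq_iff)
        then have "V ** E ** V' = dg S" using F_def by simp
        then show ?thesis using VV' V'V by (intro exI[of _ V] exI[of _ V'] exI[of _ S]) simp
      next
        case False
        then obtain i j where iS: "i \<notin> S" and jS: "j \<notin> S" and Fij: "F$i$j \<noteq> 0" by blast
        define v where "v = (\<chi> r. F$r$j)"
        have v0: "v \<noteq> 0" using Fij by (auto simp: v_def vec_eq_iff)
        have Fv: "F *v v = v"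
        proof -
          have "(F *v v)$r = (F ** F)$r$j" for r by (simp add: mv_nth mm_nth v_def)
          then show ?thesis using FF by (simp add: vec_eq_iff v_def)
        qed
        obtain d w where dw: "d \<noteq> 0" "v = d *s w" "unimod w" using bez_vec[OF bez v0] by blast
        have wS: "\<forall>r\<in>S. w$r = 0"
        proof
          fix r assume rS: "r \<in> S"
          have "v$r = 0" using bF rS jS unfolding F_def[symmetric] by (auto simp: v_def blk_def)
          then show "w$r = 0" using dw by simp
        qed
        have Fw: "F *v w = w"
        proof -
          have "d *s (F *v w) = d *s w" using Fv dw by (simp add: mv_scale)
          then show ?thesis using dw(1) by (simp add: vec_eq_iff)
        qed
        obtain U U' t where U: "U ** U' = mat 1" "U' ** U = mat 1" "blk S U" "blk S U'"
            "U *v w = axis t 1" "t \<notin> S"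
          using unimod_to_axis[OF bez dw(3) wS] by blast
        define F1 where "F1 = U ** F ** U'"
        have bF1: "blk S F1" unfolding F1_def using blk_mult U bF F_def by metis
        have F1F1: "F1 ** F1 = F1" unfolding F1_def conj_mult[OF U(2)] FF ..
        have F1t: "F1 *v axis t 1 = axis t 1"
        proof -
          have "F1 *v axis t 1 = U *v (F *v ((U' ** U) *v w))"
            by (simp add: F1_def U(5)[symmetric] matrix_vector_mul_assoc matrix_mul_assoc)
          also have "\<dots> = axis t 1" using U(2,5) Fw by simp
          finally show ?thesis .
        qed
        have F1col: "F1$r$t = (if r = t then 1 else 0)" for r
        proof -
          have "(F1 *v axis t 1)$r = (axis t 1 :: 'a^'n)$r" using F1t by simp
          then show ?thesis unfolding mv_axis by (simp add: axis_def)
        qed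
        define x where "x = (\<chi> s. F1$t$s - (if s = t then 1 else 0))"
        have xt: "x$t = 0" by (simp add: x_def F1col)
        have xS: "x$s = 0" if "s \<in> S" for s
          using bF1 that U(6) by (auto simp: x_def blk_def)
        define R where "R = ((\<chi> r s. if r = t then x$s else 0) :: 'a^'n^'n)"
        have RR: "R ** R = 0"
        proof -
          have "(R ** R)$r$s = 0" for r s
          proof -
            have "(R ** R)$r$s = R$r$t * R$t$s"
              unfolding mm_nth by (rule sum1) (simp add: R_def xt)
            then show ?thesis by (simp add: R_def xt)
          qed
          then show ?thesis by (simp add: vec_eq_iff)
        qed
        have RF: "R ** F1 = 0"
        proof -
          have "(R ** F1)$r$s = 0" for r s
          proof (cases "r = t")
            case True
            have "(R ** F1)$r$s = (\<Sum>k\<in>UNIV. F1$t$k * F1$k$s - (if k = t then F1$k$s else 0))"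
              unfolding mm_nth by (rule sum.cong) (auto simp: R_def x_def True algebra_simps)
            also have "\<dots> = (F1 ** F1)$t$s - F1$t$s"
              by (simp add: sum_subtractf mm_nth)
            finally show ?thesis using F1F1 by simp
          next
            case False
            then show ?thesis by (simp add: mm_nth R_def)
          qed
          then show ?thesis by (simp add: vec_eq_iff)
        qed
        have FR: "F1 ** R = R"
        proof -
          have "(F1 ** R)$r$s = R$r$s" for r s
          proof -
            have "(F1 ** R)$r$s = F1$r$t * R$t$s"
              unfolding mm_nth by (rule sum1) (simp add: R_def)
            then show ?thesis by (simp add: R_def F1col)
          qed
          then show ?thesis by (simp add: vec_eq_iff)
        qed
        define V2 where "V2 = mat 1 + R"
        define V2' where "V2' = mat 1 - R"
        have V2i: "V2 ** V2' = mat 1"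
          unfolding V2_def V2'_def by (simp add: msub_ldistrib madd_rdistrib RR)
        have V2i': "V2' ** V2 = mat 1"
          unfolding V2_def V2'_def by (simp add: matrix_add_ldistrib msub_rdistrib RR)
        have F2: "V2 ** F1 ** V2' = F1 - R"
          unfolding V2_def V2'_def by (simp add: msub_ldistrib madd_rdistrib RF FR)
        have bF2: "blk (insert t S) (F1 - R)"
        proof -
          have "(F1 - R)$a$b = (if a = b then 1 else 0)" if h: "a \<in> insert t S \<or> b \<in> insert t S" for a b
          proof -
            consider "a \<in> S" | "b \<in> S" | "a = t" | "b = t" using h by auto
            then show ?thesis
            proof cases
              case 1 then show ?thesis using bF1 U(6) by (auto simp: blk_def R_def)
            next
              case 2 then show ?thesis using bF1 xS by (auto simp: blk_def R_def)
            next
              case 3 then show ?thesis by (auto simp: R_def x_def)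
            next
              case 4 then show ?thesis by (auto simp: R_def xt F1col)
            qed
          qed
          then show ?thesis by (simp add: blk_def)
        qed
        define Vn where "Vn = V2 ** U ** V"
        define Vn' where "Vn' = V' ** U' ** V2'"
        have vn1: "Vn ** Vn' = mat 1" unfolding Vn_def Vn'_def
          by (metis inv_comp U(1) VV' V2i matrix_mul_assoc)
        have vn2: "Vn' ** Vn = mat 1" unfolding Vn_def Vn'_def
          by (metis inv_comp U(2) V'V V2i' matrix_mul_assoc)
        have vn3: "Vn ** E ** Vn' = F1 - R"
        proof -
          have "Vn ** E ** Vn' = V2 ** (U ** (V ** E ** V') ** U') ** V2'"
            by (simp only: Vn_def Vn'_def matrix_mul_assoc)
          then show ?thesis using F2 F_def F1_def by simp
        qed
        have lt: "card (- insert t S) < N"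
        proof -
          have "t \<in> - S" using U(6) by simp
          then have "card (- S - {t}) < card (- S)" by (intro card_Diff1_less) auto
          moreover have "- insert t S = - S - {t}" by auto
          ultimately show ?thesis using cS by simp
        qed
        have "blk (insert t S) (Vn ** E ** Vn')" using vn3 bF2 by simp
        then show ?thesis by (rule less.IH[OF lt, rule_format, of "insert t S" Vn Vn', OF refl vn1 vn2])
      qed
    qed
  qed
  show ?thesis
    by (rule main[where N = "card (- {}::'n set)", rule_format, of "{}" "mat 1" "mat 1", OF refl]) (simp_all add: blk_def)
qed


lemma ra: "A ** B = C \<Longrightarrow> A ** (B ** D) = C ** D"
  by (metis matrix_mul_assoc)

lemma dg_idem: "dg S ** dg S = (dg S :: 'a::comm_ring_1^'n::finite^'n)"
proof -
  have "(dg S ** dg S)$i$j = (dg S :: 'a^'n^'n)$i$j" for i j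
  proof -
    have "(dg S ** dg S)$i$j = (dg S :: 'a^'n^'n)$i$i * (dg S :: 'a^'n^'n)$i$j"
      unfolding mm_nth by (rule sum1) (simp add: dg_def)
    then show ?thesis by (simp add: dg_def)
  qed
  then show ?thesis by (simp add: vec_eq_iff)
qed

lemma diag_lem:
  fixes a b :: "'a::idom^'n::finite^'n"
  assumes ab: "a ** b = dg S1" and ba: "b ** a = dg S2"
    and a1: "a = dg S1 ** a ** dg S2" and b1: "b = dg S2 ** b ** dg S1"
    and card: "card (- S2) \<le> card (- S1)"
  shows "\<exists>T T'. T ** T' = mat 1 \<and> T' ** T = mat 1 \<and> dg S1 ** (T - a) = 0 \<and> (T - a) ** dg S2 = 0"
proof -
  obtain \<sigma> where sg: "\<sigma> ` (- S2) \<subseteq> - S1" "inj_on \<sigma> (- S2)"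
    using card_le_inj[OF _ _ card] by auto
  define PP where "PP = ((\<chi> i j. if j \<notin> S2 \<and> i = \<sigma> j then 1 else 0) :: 'a^'n^'n)"
  have nz: "PP$i$j \<noteq> 0 \<Longrightarrow> j \<notin> S2 \<and> i = \<sigma> j \<and> i \<notin> S1" for i j
    using sg(1) by (auto simp: PP_def split: if_splits)
  have D1P: "dg S1 ** PP = 0"
  proof -
    have "(dg S1 ** PP)$i$j = 0" for i j
    proof -
      have "(dg S1 ** PP)$i$j = (dg S1 :: 'a^'n^'n)$i$i * PP$i$j"
        unfolding mm_nth by (rule sum1) (simp add: dg_def)
      then show ?thesis using nz[of i j] by (auto simp: dg_def)
    qed
    then show ?thesis by (simp add: vec_eq_iff)
  qed
  have PD2: "PP ** dg S2 = 0"
  proof -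
    have "(PP ** dg S2)$i$j = 0" for i j
    proof -
      have "(PP ** dg S2)$i$j = PP$i$j * (dg S2 :: 'a^'n^'n)$j$j"
        unfolding mm_nth by (rule sum1) (simp add: dg_def)
      then show ?thesis using nz[of i j] by (auto simp: dg_def)
    qed
    then show ?thesis by (simp add: vec_eq_iff)
  qed
  have PtD1: "transpose PP ** dg S1 = 0"
  proof -
    have "(transpose PP ** dg S1)$i$j = 0" for i j
    proof -
      have "(transpose PP ** dg S1)$i$j = (transpose PP)$i$j * (dg S1 :: 'a^'n^'n)$j$j"
        unfolding mm_nth by (rule sum1) (simp add: dg_def)
      then show ?thesis using nz[of j i] by (auto simp: dg_def transpose_def)
    qed
    then show ?thesis by (simp add: vec_eq_iff)
  qed
  have PtP: "transpose PP ** PP = mat 1 - dg S2"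
  proof -
    have "(transpose PP ** PP)$i$j = (mat 1 - dg S2 :: 'a^'n^'n)$i$j" for i j
    proof -
      have "(transpose PP ** PP)$i$j = (transpose PP)$i$(\<sigma> i) * PP$(\<sigma> i)$j"
        unfolding mm_nth by (rule sum1) (auto simp: PP_def transpose_def)
      then show ?thesis using sg(2) by (auto simp: PP_def dg_def mat_def inj_on_def transpose_def)
    qed
    then show ?thesis by (simp add: vec_eq_iff)
  qed
  have bP: "b ** PP = 0"
    by (subst b1) (simp add: matrix_mul_assoc[symmetric] D1P)
  have Pa: "transpose PP ** a = 0"
    by (subst a1) (simp add: matrix_mul_assoc PtD1)
  define T where "T = a + PP"
  define T' where "T' = b + transpose PP"
  have TT: "T' ** T = mat 1"
    unfolding T_def T'_def
    by (simp add: matrix_add_ldistrib madd_rdistrib ba bP Pa PtP)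
  have TT': "T ** T' = mat 1" by (rule idom_left_right[OF TT])
  have "T - a = PP" by (simp add: T_def)
  then show ?thesis using TT TT' D1P PD2 by auto
qed

lemma mid_cancel: "W' ** W = mat 1 \<Longrightarrow> (U ** X ** W') ** (W ** Y ** Z) = U ** (X ** Y) ** (Z::'a::semiring_1^'n^'n)"
proof -
  assume h: "W' ** W = mat 1"
  have "(U ** X ** W') ** (W ** Y ** Z) = U ** X ** (W' ** W) ** Y ** Z" by (simp only: matrix_mul_assoc)
  also have "\<dots> = U ** (X ** Y) ** Z" using h by (simp add: matrix_mul_assoc)
  finally show ?thesis .
qed

lemma gen:
  fixes E1 E2 \<alpha> \<beta> :: "'a::idom^'n::finite^'n"
  assumes bez: "bezout_domain TYPE('a)" and E1: "E1 ** E1 = E1" and E2: "E2 ** E2 = E2"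
    and ab: "\<alpha> ** \<beta> = E1" and ba: "\<beta> ** \<alpha> = E2"
    and a1: "\<alpha> = E1 ** \<alpha> ** E2" and b1: "\<beta> = E2 ** \<beta> ** E1"
  shows "\<exists>T T'. T ** T' = mat 1 \<and> T' ** T = mat 1 \<and> E1 ** (T - \<alpha>) = 0 \<and> (T - \<alpha>) ** E2 = 0"
proof -
  obtain V1 V1' :: "'a^'n^'n" and S1 where V1: "V1 ** V1' = mat 1" "V1' ** V1 = mat 1" "V1 ** E1 ** V1' = dg S1"
    using idem_diag[OF bez E1] by blast
  obtain V2 V2' :: "'a^'n^'n" and S2 where V2: "V2 ** V2' = mat 1" "V2' ** V2 = mat 1" "V2 ** E2 ** V2' = dg S2"
    using idem_diag[OF bez E2] by blast
  define a where "a = V1 ** \<alpha> ** V2'"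
  define b where "b = V2 ** \<beta> ** V1'"
  have ab': "a ** b = dg S1" unfolding a_def b_def mid_cancel[OF V2(2)] ab V1(3) ..
  have ba': "b ** a = dg S2" unfolding a_def b_def mid_cancel[OF V1(2)] ba V2(3) ..
  have a1': "a = dg S1 ** a ** dg S2"
  proof -
    have "dg S1 ** a ** dg S2 = (V1 ** (E1 ** \<alpha>) ** V2') ** (V2 ** E2 ** V2')"
      unfolding a_def V1(3)[symmetric] V2(3)[symmetric] mid_cancel[OF V1(2)] ..
    also have "\<dots> = V1 ** (E1 ** \<alpha> ** E2) ** V2'" unfolding mid_cancel[OF V2(2)] ..
    finally show ?thesis using a1 a_def by simp
  qed
  have b1': "b = dg S2 ** b ** dg S1"
  proof -
    have "dg S2 ** b ** dg S1 = (V2 ** (E2 ** \<beta>) ** V1') ** (V1 ** E1 ** V1')"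
      unfolding b_def V2(3)[symmetric] V1(3)[symmetric] mid_cancel[OF V2(2)] ..
    also have "\<dots> = V2 ** (E2 ** \<beta> ** E1) ** V1'" unfolding mid_cancel[OF V1(2)] ..
    finally show ?thesis using b1 b_def by simp
  qed
  have "\<exists>T0 T0'. T0 ** T0' = mat 1 \<and> T0' ** T0 = mat 1 \<and> dg S1 ** (T0 - a) = 0 \<and> (T0 - a) ** dg S2 = 0"
  proof (cases "card (- S2) \<le> card (- S1)")
    case True
    then show ?thesis using diag_lem[OF ab' ba' a1' b1'] by blast
  next
    case False
    then obtain T0 T0' where T0: "T0 ** T0' = mat 1" "T0' ** T0 = mat 1" "dg S2 ** (T0 - b) = 0" "(T0 - b) ** dg S1 = 0"
      using diag_lem[OF ba' ab' b1' a1'] by fastforce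
    have h1: "(dg S1 ** a ** dg S2) ** dg S2 = dg S1 ** a ** dg S2"
      by (simp add: matrix_mul_assoc[symmetric] dg_idem)
    have aD2: "a ** dg S2 = a" using h1 a1' by metis
    have h2: "dg S1 ** (dg S1 ** a ** dg S2) = dg S1 ** a ** dg S2"
      by (simp add: matrix_mul_assoc dg_idem)
    have D1a: "dg S1 ** a = a" using h2 a1' by metis
    have "a ** (T0 - b) = a ** (dg S2 ** (T0 - b))" using aD2 by (metis matrix_mul_assoc)
    then have "a ** (T0 - b) = 0" using T0(3) by simp
    then have aT0: "a ** T0 = dg S1" using ab' by (simp add: msub_ldistrib)
    have "(T0 - b) ** a = (T0 - b) ** dg S1 ** a" using D1a by (metis matrix_mul_assoc)
    then have "(T0 - b) ** a = 0" using T0(4) by simp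
    then have T0a: "T0 ** a = dg S2" using ba' by (simp add: msub_rdistrib)
    have "a = dg S1 ** T0'" using aT0 T0(1) by (metis matrix_mul_assoc matrix_mul_rid)
    then have c1: "dg S1 ** (T0' - a) = 0" using D1a
      by (simp add: msub_ldistrib matrix_mul_assoc dg_idem)
    have "a = T0' ** dg S2" using T0a T0(2) by (metis matrix_mul_assoc matrix_mul_lid)
    then have c2: "(T0' - a) ** dg S2 = 0" using aD2
      by (simp add: msub_rdistrib matrix_mul_assoc[symmetric] dg_idem)
    show ?thesis using T0(1,2) c1 c2 by blast
  qed
  then obtain T0 T0' where T0: "T0 ** T0' = mat 1" "T0' ** T0 = mat 1" "dg S1 ** (T0 - a) = 0" "(T0 - a) ** dg S2 = 0"
    by blast
  define T where "T = V1' ** T0 ** V2"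
  define T' where "T' = V2' ** T0' ** V1"
  have "T ** T' = mat 1" unfolding T_def T'_def mid_cancel[OF V2(1)] T0(1)
    using V1(2) by simp
  moreover have "T' ** T = mat 1" unfolding T_def T'_def mid_cancel[OF V1(1)] T0(2)
    using V2(2) by simp
  moreover have Ta: "T - \<alpha> = V1' ** (T0 - a) ** V2"
  proof -
    have "V1' ** a ** V2 = \<alpha>" unfolding a_def
      using V1(2) V2(2) by (simp add: matrix_mul_assoc[symmetric]) (simp add: matrix_mul_assoc)
    then show ?thesis unfolding T_def by (simp add: msub_ldistrib msub_rdistrib)
  qed
  moreover have "E1 ** (T - \<alpha>) = 0"
  proof -
    have E1': "E1 = V1' ** dg S1 ** V1"
      using V1 by (simp add: V1(3)[symmetric] matrix_mul_assoc) (simp add: matrix_mul_assoc[symmetric])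
    have "E1 ** (T - \<alpha>) = V1' ** (dg S1 ** (T0 - a)) ** V2"
      unfolding Ta E1' mid_cancel[OF V1(1)] ..
    then show ?thesis using T0(3) by simp
  qed
  moreover have "(T - \<alpha>) ** E2 = 0"
  proof -
    have E2': "E2 = V2' ** dg S2 ** V2"
      using V2 by (simp add: V2(3)[symmetric] matrix_mul_assoc) (simp add: matrix_mul_assoc[symmetric])
    have "(T - \<alpha>) ** E2 = V1' ** ((T0 - a) ** dg S2) ** V2"
      unfolding Ta E2' mid_cancel[OF V2(1)] ..
    then show ?thesis using T0(4) by simp
  qed
  ultimately show ?thesis by blast
qed


lemma col_fact:
  fixes P A :: "'a::comm_ring_1^'n::finite^'n"
  assumes "col_space P = col_space (P ** A)"
  shows "\<exists>X. P = P ** A ** X"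
proof -
  have "\<forall>j. \<exists>x. P *v axis j 1 = (P ** A) *v x"
  proof
    fix j
    have "P *v axis j 1 \<in> col_space P" unfolding col_space_def by blast
    then show "\<exists>x. P *v axis j 1 = (P ** A) *v x" using assms unfolding col_space_def by auto
  qed
  then obtain f where f: "\<And>j. P *v axis j 1 = (P ** A) *v f j" by metis
  define X where "X = (\<chi> i j. f j $ i)"
  have "(P ** A ** X)$i$j = P$i$j" for i j
  proof -
    have "(P ** A ** X)$i$j = ((P ** A) *v f j)$i" by (simp add: mm_nth mv_nth X_def)
    also have "\<dots> = P$i$j" using f[of j] mv_axis[of P j i] by simp
    finally show ?thesis .
  qed
  then show ?thesis by (metis vec_eq_iff)
qed

lemma grp:
  fixes M W :: "'a::idom^'n::finite^'n"
  assumes MW: "M = M ** M ** W"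
  shows "\<exists>E G. E ** E = E \<and> E ** M = M \<and> M ** E = M \<and> M ** G = E \<and> G ** M = E \<and> G ** E = G"
proof -
  have MMW: "M ** M ** W = M" using MW by simp
  have MMW': "M ** (M ** W) = M" using MMW by (simp add: matrix_mul_assoc)
  have "M ** M ** (W ** M - mat 1) = 0"
    by (simp add: msub_ldistrib matrix_mul_assoc MMW)
  then have "M ** (W ** M - mat 1) = 0" by (rule idom_inj_mat[OF MW])
  then have MWM: "M ** W ** M = M" by (simp add: msub_ldistrib matrix_mul_assoc)
  have "M ** M ** (W ** W ** M - W) = 0"
    by (simp add: msub_ldistrib matrix_mul_assoc MMW MWM)
  then have "M ** (W ** W ** M - W) = 0" by (rule idom_inj_mat[OF MW])
  then have MWWM: "M ** W ** W ** M = M ** W" by (simp add: msub_ldistrib matrix_mul_assoc)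
  define E where "E = M ** W"
  define G where "G = M ** W ** W ** M ** W"
  have "E ** E = E" unfolding E_def by (metis MWM matrix_mul_assoc)
  moreover have "E ** M = M" unfolding E_def by (rule MWM)
  moreover have "M ** E = M" unfolding E_def by (rule MMW')
  moreover have "M ** G = E" unfolding G_def E_def
    by (metis MMW' MWM matrix_mul_assoc)
  moreover have "G ** M = E" unfolding G_def E_def
    by (metis MWWM MWM matrix_mul_assoc)
  moreover have "G ** E = G" unfolding G_def E_def
    by (metis MWM matrix_mul_assoc)
  ultimately show ?thesis by blast
qed


theorem theorem2p4:
  fixes A B C :: "'a::idom ^'n^'n"
  assumes "bezout_domain TYPE('a)"
    and "A ** B ** A = A ** C ** A"
    and "col_space (A ** B) = col_space (A ** B ** A)"
    and "col_space (C ** A) = col_space (C ** A ** B)"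
  shows "similar_matrix (A ** B) (C ** A)"
proof -
  note bez = assms(1) and h2 = assms(2) and h3 = assms(3) and h4 = assms(4)
  define P where "P = A ** B"
  define Q where "Q = C ** A"
  obtain X where X: "P = P ** A ** X" using col_fact[of P A] h3 unfolding P_def by blast
  obtain Y where Y: "Q = Q ** B ** Y" using col_fact[of Q B] h4 unfolding Q_def by blast
  have PA: "P ** A = A ** Q" using h2 by (simp add: P_def Q_def matrix_mul_assoc)
  have QB: "Q ** B = C ** P" by (simp add: P_def Q_def matrix_mul_assoc)
  have P1: "P = A ** Q ** X" using X PA by simp
  have Q1: "Q = C ** P ** Y" using Y QB by simp
  have QQ: "Q = Q ** Q ** (X ** Y)"
  proof -
    have "Q = C ** (A ** Q ** X) ** Y" using Q1 P1 by simp
    also have "\<dots> = (C ** A) ** Q ** (X ** Y)" by (simp add: matrix_mul_assoc)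
    finally show ?thesis unfolding Q_def[symmetric] .
  qed
  have PP: "P = P ** P ** (Y ** X)"
  proof -
    have "P = A ** Q ** X" by (rule P1)
    also have "\<dots> = A ** (Q ** Q ** (X ** Y)) ** X" by (rule arg_cong[OF QQ])
    also have "\<dots> = (A ** Q) ** Q ** X ** Y ** X" by (simp add: matrix_mul_assoc)
    also have "\<dots> = (P ** A) ** Q ** X ** Y ** X" by (simp only: PA)
    also have "\<dots> = P ** (A ** Q ** X) ** Y ** X" by (simp add: matrix_mul_assoc)
    also have "\<dots> = P ** P ** Y ** X" using P1 by simp
    also have "\<dots> = P ** P ** (Y ** X)" by (simp add: matrix_mul_assoc)
    finally show ?thesis .
  qed
  obtain EP GP where EP: "EP ** EP = EP" "EP ** P = P" "P ** EP = P" "P ** GP = EP" "GP ** P = EP" "GP ** EP = GP"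
    using grp[OF PP] by blast
  obtain EQ GQ where EQ: "EQ ** EQ = EQ" "EQ ** Q = Q" "Q ** EQ = Q" "Q ** GQ = EQ" "GQ ** Q = EQ" "GQ ** EQ = GQ"
    using grp[OF QQ] by blast
  define \<alpha> where "\<alpha> = A ** EQ"
  define \<beta> where "\<beta> = Q ** X ** GP"
  have AEQ: "EP ** \<alpha> = \<alpha>"
  proof -
    have "\<alpha> = P ** A ** GQ" unfolding \<alpha>_def EQ(4)[symmetric] PA by (simp add: matrix_mul_assoc)
    then show ?thesis using EP(2) by (metis matrix_mul_assoc)
  qed
  have Ab: "A ** \<beta> = EP" unfolding \<beta>_def EP(4)[symmetric] P1 by (simp add: matrix_mul_assoc)
  have ab: "\<alpha> ** \<beta> = EP"
  proof -
    have "\<alpha> ** \<beta> = A ** (EQ ** Q) ** X ** GP" by (simp add: \<alpha>_def \<beta>_def matrix_mul_assoc)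
    then show ?thesis using EQ(2) Ab by (simp add: \<beta>_def matrix_mul_assoc)
  qed
  have EQb: "EQ ** \<beta> = \<beta>" unfolding \<beta>_def using EQ(2) by (metis matrix_mul_assoc)
  have bEP: "\<beta> ** EP = \<beta>" unfolding \<beta>_def using EP(6) by (metis matrix_mul_assoc)
  have ba: "\<beta> ** \<alpha> = EQ"
  proof -
    define D where "D = \<beta> ** \<alpha> - EQ"
    have ED: "EQ ** D = D" unfolding D_def
      by (simp add: msub_ldistrib matrix_mul_assoc EQb EQ(1))
    have AD: "A ** D = 0" unfolding D_def
      by (simp add: msub_ldistrib matrix_mul_assoc Ab AEQ) (simp add: \<alpha>_def)
    have "Q ** Q ** (GQ ** D) = Q ** (Q ** GQ) ** D" by (simp add: matrix_mul_assoc)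
    also have "\<dots> = Q ** D" using ED EQ(4) by (simp add: matrix_mul_assoc[symmetric])
    also have "\<dots> = C ** (A ** D)" by (simp add: Q_def matrix_mul_assoc)
    also have "\<dots> = 0" using AD by simp
    finally have "Q ** (GQ ** D) = 0" by (rule idom_inj_mat[OF QQ])
    then have "EQ ** D = 0" using EQ(4) by (metis matrix_mul_assoc)
    then have "D = 0" using ED by simp
    then show ?thesis unfolding D_def by simp
  qed
  have a1: "\<alpha> = EP ** \<alpha> ** EQ"
    using AEQ EQ(1) by (simp add: \<alpha>_def matrix_mul_assoc[symmetric])
  have b1: "\<beta> = EQ ** \<beta> ** EP" using EQb bEP by simp
  obtain T T' where T: "T ** T' = mat 1" "T' ** T = mat 1" "EP ** (T - \<alpha>) = 0" "(T - \<alpha>) ** EQ = 0"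
    using gen[OF bez EP(1) EQ(1) ab ba a1 b1] by blast
  define K where "K = T - \<alpha>"
  have TK: "T = \<alpha> + K" by (simp add: K_def)
  have KQ: "K ** Q = 0"
  proof -
    have "K ** Q = (K ** EQ) ** Q" using EQ(2) by (metis matrix_mul_assoc)
    then show ?thesis using T(4) K_def by simp
  qed
  have PK: "P ** K = 0"
  proof -
    have "P ** K = P ** (EP ** K)" using EP(3) by (metis matrix_mul_assoc)
    then show ?thesis using T(3) K_def by simp
  qed
  have aQ: "\<alpha> ** Q = A ** Q" unfolding \<alpha>_def using EQ(2) by (metis matrix_mul_assoc)
  have Pa: "P ** \<alpha> = A ** Q"
  proof -
    have "P ** \<alpha> = A ** (Q ** EQ)" unfolding \<alpha>_def by (simp add: matrix_mul_assoc PA)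
    then show ?thesis using EQ(3) by simp
  qed
  have TQ: "T ** Q = P ** T"
    unfolding TK by (simp add: madd_rdistrib matrix_add_ldistrib KQ PK aQ Pa)
  have "P = T ** Q ** T'"
    by (simp add: TQ matrix_mul_assoc[symmetric] T(1))
  then show ?thesis unfolding similar_matrix_def P_def Q_def using T(1,2) by blast
qed


end
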